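(* Let $\tilde X\in\mathbb{R}^{n\times k}$ have columns of unit Euclidean norm ($\Gamma_{\ell\ell}=1$ for all $\ell$, $\Gamma=\tilde X^t\tilde X$), let $0<\nu<1$, and let $\mathcal{I}\subset\{1,\dots,k\}$ satisfy $\tau(\mathcal{I})\le\nu$. Then for every $x\in\mathbb{R}^n$, $$(1+\nu)^{-1}\sum_{\ell\in\mathcal{I}}\Big(\sum_{i=1}^n x_i\tilde X_{i\ell}\Big)^2\le \|P_{V_{\mathcal{I}}}x\|_2^2\le (1-\nu)^{-1}\sum_{\ell\in\mathcal{I}}\Big(\sum_{i=1}^n x_i\tilde X_{i\ell}\Big)^2.$$
   Context: $\mathcal{G}_1,\dots,\mathcal{G}_p$ is a partition of $\{1,\dots,k\}$ into groups with $t_j=\#\mathcal{G}_j$; each index $\ell$ is written $\ell=(j,t)$ with $j$ the group containing $\ell$ and $t\in\{1,\dots,t_j\}$ its rank inside $\mathcal{G}_j$. $V_{\mathcal{I}}$ is the linear span of the columns $\tilde X_{\bullet\ell}$, $\ell\in\mathcal{I}$, and $P_{V_{\mathcal{I}}}$ the orthogonal projection onto it. $\gamma_{BT}=\sup\{|\Gamma_{(j,t)(j',t')}|: t\neq t'\}$ (over all $j,j'$ and admissible ranks), $\gamma_{BG}=\sup\{|\Gamma_{(j,t)(j',t)}|: j\ne j',\ t\le t_j\wedge t_{j'}\}$, and $\tau(\mathcal{I})=\#(\mathcal{I})\,\gamma_{BT}+\#\{j:\exists t,\ (j,t)\in\mathcal{I}\}\,\gamma_{BG}$. *)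

theory Defs
  imports "HOL-Analysis.Analysis"
begin

definition orth_proj :: "('a::euclidean_space) set \<Rightarrow> 'a \<Rightarrow> 'a" where
  "orth_proj S x = (THE p. p \<in> span S \<and> (\<forall>v\<in>span S. (x - p) \<bullet> v = 0))"

definition gram :: "real^'k^'n \<Rightarrow> 'k \<Rightarrow> 'k \<Rightarrow> real" where
  "gram X l l' = (\<Sum>i\<in>UNIV. X $ i $ l * X $ i $ l')"

text \<open>Group structure: g l is the group of column l, r l its rank inside the group.
  Each group G_j = {l. g l = j} is ranked bijectively by 1..#G_j.\<close>
definition group_ranking :: "('k::finite \<Rightarrow> 'j) \<Rightarrow> ('k \<Rightarrow> nat) \<Rightarrow> bool" where
  "group_ranking g r \<longleftrightarrow>
     (\<forall>j. bij_betw r {l. g l = j} {1..card {l. g l = j}})"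

text \<open>gamma_BT: sup of |Gamma_(l,l')| over pairs of different ranks (sup of empty set := 0).\<close>
definition gamma_BT :: "real^'k::finite^'n::finite \<Rightarrow> ('k \<Rightarrow> nat) \<Rightarrow> real" where
  "gamma_BT X r = Max (insert 0 {\<bar>gram X l l'\<bar> | l l'. r l \<noteq> r l'})"

definition gamma_BG :: "real^'k::finite^'n::finite \<Rightarrow> ('k \<Rightarrow> 'j) \<Rightarrow> ('k \<Rightarrow> nat) \<Rightarrow> real" where
  "gamma_BG X g r = Max (insert 0 {\<bar>gram X l l'\<bar> | l l'. g l \<noteq> g l' \<and> r l = r l'})"

definition tau :: "real^'k::finite^'n::finite \<Rightarrow> ('k \<Rightarrow> 'j) \<Rightarrow> ('k \<Rightarrow> nat) \<Rightarrow> 'k set \<Rightarrow> real" where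
  "tau X g r I = real (card I) * gamma_BT X r + real (card (g ` I)) * gamma_BG X g r"

end

theory Submission imports Defs begin

lemma span_image_sum:
  fixes f :: "'k \<Rightarrow> 'a::real_vector"
  assumes "finite I" "p \<in> span (f ` I)"
  shows "\<exists>a. p = (\<Sum>l\<in>I. a l *\<^sub>R f l)"
  using assms
proof (induction I arbitrary: p rule: finite_induct)
  case empty then show ?case by simp
next
  case (insert l I)
  from insert.prems have "p \<in> span (insert (f l) (f ` I))" by simp
  then obtain k where k: "p - k *\<^sub>R f l \<in> span (f ` I)" by (auto simp: span_insert)
  from insert.IH[OF k] obtain a where a: "p - k *\<^sub>R f l = (\<Sum>l\<in>I. a l *\<^sub>R f l)" by blast
  have "(\<Sum>l'\<in>insert l I. (a(l:=k)) l' *\<^sub>R f l') = k *\<^sub>R f l + (\<Sum>l'\<in>I. a l' *\<^sub>R f l')"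
    using insert.hyps by (simp add: sum.insert) (intro sum.cong, auto)
  with a show ?case by (metis add_diff_cancel_left' diff_add_cancel add.commute)
qed

lemma quad_bound:
  fixes G :: "'k \<Rightarrow> 'k \<Rightarrow> real" and b :: "'k \<Rightarrow> real"
  assumes fin: "finite I" and sym: "\<And>l l'. G l l' = G l' l" and diag: "\<And>l. G l l = 1"
    and row: "\<And>l. l \<in> I \<Longrightarrow> (\<Sum>l'\<in>I. if l' = l then 0 else \<bar>G l l'\<bar>) \<le> \<nu>"
  shows "\<bar>(\<Sum>l\<in>I. \<Sum>l'\<in>I. b l * b l' * G l l') - (\<Sum>l\<in>I. (b l)\<^sup>2)\<bar> \<le> \<nu> * (\<Sum>l\<in>I. (b l)\<^sup>2)"
proof -
  define Om where "Om l l' = (if l' = l then 0 else \<bar>G l l'\<bar>)" for l l'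
  have split: "(\<Sum>l\<in>I. \<Sum>l'\<in>I. b l * b l' * G l l') - (\<Sum>l\<in>I. (b l)\<^sup>2)
      = (\<Sum>l\<in>I. \<Sum>l'\<in>I. if l' = l then 0 else b l * b l' * G l l')"
  proof -
    have "\<And>l. l \<in> I \<Longrightarrow> (\<Sum>l'\<in>I. b l * b l' * G l l') = (b l)\<^sup>2 + (\<Sum>l'\<in>I. if l' = l then 0 else b l * b l' * G l l')"
    proof -
      fix l assume l: "l \<in> I"
      have "(\<Sum>l'\<in>I. b l * b l' * G l l') = (\<Sum>l'\<in>I. (if l' = l then (b l)\<^sup>2 else 0) + (if l' = l then 0 else b l * b l' * G l l'))"
        by (rule sum.cong) (auto simp: diag power2_eq_square)
      also have "\<dots> = (b l)\<^sup>2 + (\<Sum>l'\<in>I. if l' = l then 0 else b l * b l' * G l l')"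
        using l fin by (simp add: sum.distrib)
      finally show "?thesis l" .
    qed
    then show ?thesis by (simp add: sum.distrib)
  qed
  have "\<bar>\<Sum>l\<in>I. \<Sum>l'\<in>I. if l' = l then 0 else b l * b l' * G l l'\<bar>
      \<le> (\<Sum>l\<in>I. \<Sum>l'\<in>I. ((b l)\<^sup>2 + (b l')\<^sup>2) / 2 * Om l l')"
  proof -
    have "\<bar>\<Sum>l\<in>I. \<Sum>l'\<in>I. if l' = l then 0 else b l * b l' * G l l'\<bar>
        \<le> (\<Sum>l\<in>I. \<bar>\<Sum>l'\<in>I. if l' = l then 0 else b l * b l' * G l l'\<bar>)" by (rule sum_abs)
    also have "\<dots> \<le> (\<Sum>l\<in>I. \<Sum>l'\<in>I. \<bar>if l' = l then 0 else b l * b l' * G l l'\<bar>)"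
      by (intro sum_mono sum_abs)
    also have "\<dots> \<le> (\<Sum>l\<in>I. \<Sum>l'\<in>I. ((b l)\<^sup>2 + (b l')\<^sup>2) / 2 * Om l l')"
    proof (intro sum_mono)
      fix l l'
      have "\<bar>b l * b l'\<bar> \<le> ((b l)\<^sup>2 + (b l')\<^sup>2) / 2"
        using sum_squares_ge_zero[of "\<bar>b l\<bar> - \<bar>b l'\<bar>" 0] 
        by (simp add: abs_mult power2_eq_square algebra_simps)
      then show "\<bar>if l' = l then 0 else b l * b l' * G l l'\<bar> \<le> ((b l)\<^sup>2 + (b l')\<^sup>2) / 2 * Om l l'"
      proof (cases "l' = l")
        case True then show ?thesis by (simp add: Om_def)
      next
        case False
        have "\<bar>b l * b l' * G l l'\<bar> = \<bar>b l * b l'\<bar> * \<bar>G l l'\<bar>" by (simp add: abs_mult)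
        also have "\<dots> \<le> ((b l)\<^sup>2 + (b l')\<^sup>2) / 2 * \<bar>G l l'\<bar>"
          using \<open>\<bar>b l * b l'\<bar> \<le> _\<close> by (rule mult_right_mono) simp
        finally show ?thesis using False by (simp add: Om_def)
      qed
    qed
    finally show ?thesis .
  qed
  also have "\<dots> = (\<Sum>l\<in>I. \<Sum>l'\<in>I. (b l)\<^sup>2 / 2 * Om l l') + (\<Sum>l\<in>I. \<Sum>l'\<in>I. (b l')\<^sup>2 / 2 * Om l l')"
    by (simp add: sum.distrib add_divide_distrib distrib_right)
  also have "(\<Sum>l\<in>I. \<Sum>l'\<in>I. (b l')\<^sup>2 / 2 * Om l l') = (\<Sum>l\<in>I. \<Sum>l'\<in>I. (b l)\<^sup>2 / 2 * Om l l')"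
    by (subst sum.swap) (auto simp: Om_def sym intro!: sum.cong)
  also have "(\<Sum>l\<in>I. \<Sum>l'\<in>I. (b l)\<^sup>2 / 2 * Om l l') + (\<Sum>l\<in>I. \<Sum>l'\<in>I. (b l)\<^sup>2 / 2 * Om l l')
      = (\<Sum>l\<in>I. (b l)\<^sup>2 * (\<Sum>l'\<in>I. Om l l'))"
    by (simp add: sum_distrib_left sum_distrib_right mult.commute flip: sum.distrib)
  also have "\<dots> \<le> (\<Sum>l\<in>I. (b l)\<^sup>2 * \<nu>)"
    by (intro sum_mono mult_left_mono) (auto simp: Om_def row)
  finally show ?thesis using split by (simp add: sum_distrib_left mult.commute)
qed

lemma gram_inner: "gram X l l' = column l X \<bullet> column l' X"
  by (simp add: gram_def column_def inner_vec_def)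

lemma finite_absset: "finite {\<bar>gram X l l'\<bar> | l l'. P l l'}" for X :: "real^'k::finite^'n::finite"
proof -
  have "{\<bar>gram X l l'\<bar> | l l'. P l l'} \<subseteq> (\<lambda>(l,l'). \<bar>gram X l l'\<bar>) ` UNIV" by auto
  then show ?thesis by (rule finite_subset) simp
qed

lemma gBT: "r l \<noteq> r l' \<Longrightarrow> \<bar>gram X l l'\<bar> \<le> gamma_BT X r"
  unfolding gamma_BT_def by (rule Max_ge) (auto simp: finite_absset)

lemma gBT0: "0 \<le> gamma_BT X r"
  unfolding gamma_BT_def by (rule Max_ge) (auto simp: finite_absset)

lemma gBG: "g l \<noteq> g l' \<Longrightarrow> r l = r l' \<Longrightarrow> \<bar>gram X l l'\<bar> \<le> gamma_BG X g r"
  unfolding gamma_BG_def by (rule Max_ge) (auto simp: finite_absset)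

lemma gBG0: "0 \<le> gamma_BG X g r"
  unfolding gamma_BG_def by (rule Max_ge) (auto simp: finite_absset)

lemma rowsum:
  fixes X :: "real^'k::finite^'n::finite" and g :: "'k \<Rightarrow> nat" and r :: "'k \<Rightarrow> nat"
  assumes groups: "group_ranking g r" and l: "l \<in> I"
  shows "(\<Sum>l'\<in>I. if l' = l then 0 else \<bar>gram X l l'\<bar>) \<le> tau X g r I"
proof -
  define A where "A = {l'\<in>I. r l' \<noteq> r l}"
  define B where "B = {l'\<in>I. r l' = r l \<and> l' \<noteq> l}"
  have "(\<Sum>l'\<in>I. if l' = l then 0 else \<bar>gram X l l'\<bar>)
      = (\<Sum>l'\<in>I. (if r l' \<noteq> r l then \<bar>gram X l l'\<bar> else 0) + (if r l' = r l \<and> l' \<noteq> l then \<bar>gram X l l'\<bar> else 0))"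
    by (rule sum.cong) auto
  also have "\<dots> = sum (\<lambda>l'. \<bar>gram X l l'\<bar>) A + sum (\<lambda>l'. \<bar>gram X l l'\<bar>) B"
    unfolding A_def B_def by (simp add: sum.distrib sum.inter_filter)
  also have "sum (\<lambda>l'. \<bar>gram X l l'\<bar>) A \<le> real (card I) * gamma_BT X r"
  proof -
    have "sum (\<lambda>l'. \<bar>gram X l l'\<bar>) A \<le> sum (\<lambda>_. gamma_BT X r) A"
      by (rule sum_mono) (auto simp: A_def intro: gBT)
    also have "\<dots> = real (card A) * gamma_BT X r" by simp
    also have "\<dots> \<le> real (card I) * gamma_BT X r"
      by (intro mult_right_mono gBT0) (auto simp: A_def intro: card_mono)
    finally show ?thesis .
  qed
  also have "sum (\<lambda>l'. \<bar>gram X l l'\<bar>) B \<le> real (card (g ` I)) * gamma_BG X g r"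
  proof -
    have gne: "g l \<noteq> g l'" if "l' \<in> B" for l'
    proof
      assume eq0: "g l = g l'"
      then have eq: "g l' = g l" by simp
      have inj: "inj_on r {m. g m = g l}" using groups unfolding group_ranking_def bij_betw_def by blast
      have "l' = l" using inj_onD[OF inj, of l' l] that eq by (auto simp: B_def)
      then show False using that by (auto simp: B_def)
    qed
    have injB: "inj_on g B"
    proof (rule inj_onI)
      fix a b assume ab: "a \<in> B" "b \<in> B" "g a = g b"
      have "inj_on r {m. g m = g a}" using groups unfolding group_ranking_def bij_betw_def by blast
      then show "a = b" using ab unfolding B_def inj_on_def by auto
    qed
    have "sum (\<lambda>l'. \<bar>gram X l l'\<bar>) B \<le> sum (\<lambda>_. gamma_BG X g r) B"
      by (rule sum_mono) (rule gBG, use gne in \<open>auto simp: B_def\<close>)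
    also have "\<dots> = real (card B) * gamma_BG X g r" by simp
    also have "card B = card (g ` B)" using injB by (simp add: card_image)
    also have "real (card (g ` B)) * gamma_BG X g r \<le> real (card (g ` I)) * gamma_BG X g r"
      by (intro mult_right_mono gBG0) (auto simp: B_def intro!: card_mono)
    finally show ?thesis .
  qed
  finally show ?thesis by (simp add: tau_def)
qed

lemma norm_sum_sq:
  fixes w :: "'k \<Rightarrow> 'a::real_inner"
  shows "(norm (\<Sum>l\<in>I. b l *\<^sub>R w l))\<^sup>2 = (\<Sum>l\<in>I. \<Sum>l'\<in>I. b l * b l' * (w l \<bullet> w l'))"
  unfolding power2_norm_eq_inner inner_sum_left inner_scaleR_left inner_sum_right inner_scaleR_right sum_distrib_left
  by (intro sum.cong refl) (simp add: inner_commute mult.assoc)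

theorem lemma2:
  fixes X :: "real^'k::finite^'n::finite" and g :: "'k \<Rightarrow> nat" and r :: "'k \<Rightarrow> nat"
    and \<nu> :: real and I :: "'k set" and x :: "real^'n"
  assumes groups: "group_ranking g r"
    and unit: "\<And>l. gram X l l = 1"
    and nu: "0 < \<nu>" "\<nu> < 1"
    and tauI: "tau X g r I \<le> \<nu>"
  shows "inverse (1 + \<nu>) * (\<Sum>l\<in>I. (\<Sum>i\<in>UNIV. x $ i * X $ i $ l)\<^sup>2)
           \<le> (norm (orth_proj ((\<lambda>l. column l X) ` I) x))\<^sup>2 \<and>
         (norm (orth_proj ((\<lambda>l. column l X) ` I) x))\<^sup>2
           \<le> inverse (1 - \<nu>) * (\<Sum>l\<in>I. (\<Sum>i\<in>UNIV. x $ i * X $ i $ l)\<^sup>2)"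
proof -
  define w where "w l = column l X" for l
  define S where "S = w ` I"
  define p where "p = orth_proj S x"
  define c where "c l = x \<bullet> w l" for l
  have fin: "finite I" by simp
  have cdef: "(\<Sum>i\<in>UNIV. x $ i * X $ i $ l) = c l" for l
    by (simp add: c_def w_def column_def inner_vec_def)
  have G: "gram X l l' = w l \<bullet> w l'" for l l' by (simp add: w_def gram_inner)
  have quad: "\<bar>(norm (\<Sum>l\<in>I. b l *\<^sub>R w l))\<^sup>2 - (\<Sum>l\<in>I. (b l)\<^sup>2)\<bar> \<le> \<nu> * (\<Sum>l\<in>I. (b l)\<^sup>2)" for b
    unfolding norm_sum_sq
  proof (rule quad_bound[where G="\<lambda>l l'. w l \<bullet> w l'"])
    fix l assume l: "l \<in> I"
    show "(\<Sum>l'\<in>I. if l' = l then 0 else \<bar>w l \<bullet> w l'\<bar>) \<le> \<nu>"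
      using rowsum[OF groups l, of X] tauI unfolding G by linarith
  qed (use unit in \<open>auto simp: G inner_commute\<close>)
  have pchar: "p \<in> span S \<and> (\<forall>v\<in>span S. (x - p) \<bullet> v = 0)"
  proof -
    obtain y z where y: "y \<in> span S" and z: "\<And>v. v \<in> span S \<Longrightarrow> orthogonal z v" and xyz: "x = y + z"
      using orthogonal_subspace_decomp_exists[of S x] by blast
    have ex: "y \<in> span S \<and> (\<forall>v\<in>span S. (x - y) \<bullet> v = 0)"
      using y z xyz by (auto simp: orthogonal_def)
    have uq: "q = y" if q: "q \<in> span S \<and> (\<forall>v\<in>span S. (x - q) \<bullet> v = 0)" for q
    proof -
      have d: "q - y \<in> span S" using q y by (simp add: span_diff)
      have "(q - y) \<bullet> (q - y) = (x - y) \<bullet> (q - y) - (x - q) \<bullet> (q - y)"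
        by (simp add: inner_diff_left)
      also have "\<dots> = 0" using q ex d by auto
      finally show ?thesis by simp
    qed
    have "p = y" unfolding p_def orth_proj_def
    proof (rule the_equality[where a=y])
      show "y \<in> span S \<and> (\<forall>v\<in>span S. (x - y) \<bullet> v = 0)" by (rule ex)
    next
      fix q assume "q \<in> span S \<and> (\<forall>v\<in>span S. (x - q) \<bullet> v = 0)"
      then show "q = y" by (rule uq)
    qed
    with ex show ?thesis by simp
  qed
  have wS: "w l \<in> span S" if "l \<in> I" for l using that by (auto simp: S_def intro: span_base)
  have cp: "c l = p \<bullet> w l" if "l \<in> I" for l
  proof -
    have "(x - p) \<bullet> w l = 0" using pchar wS[OF that] by blast
    then show ?thesis by (simp add: c_def inner_diff_left)
  qed
  obtain a where a: "p = (\<Sum>l\<in>I. a l *\<^sub>R w l)"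
    using span_image_sum[OF fin, of p w] pchar unfolding S_def by blast
  define N where "N = (norm p)\<^sup>2"
  define C where "C = (\<Sum>l\<in>I. (c l)\<^sup>2)"
  have N0: "0 \<le> N" by (simp add: N_def)
  have C0: "0 \<le> C" by (simp add: C_def sum_nonneg)
  have Nac: "N = (\<Sum>l\<in>I. a l * c l)"
  proof -
    have "N = p \<bullet> p" by (simp add: N_def power2_norm_eq_inner)
    also have "\<dots> = (\<Sum>l\<in>I. a l * (p \<bullet> w l))" by (subst (2) a) (simp add: inner_sum_right)
    also have "\<dots> = (\<Sum>l\<in>I. a l * c l)" by (rule sum.cong) (auto simp: cp)
    finally show ?thesis .
  qed
  have low: "C \<le> (1 + \<nu>) * N"
  proof -
    define q where "q = (\<Sum>l\<in>I. c l *\<^sub>R w l)"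
    have "C = (\<Sum>l\<in>I. c l * (p \<bullet> w l))" unfolding C_def
      by (rule sum.cong) (auto simp: cp power2_eq_square)
    also have "\<dots> = p \<bullet> q" by (simp add: q_def inner_sum_right)
    finally have Cpq: "C = p \<bullet> q" .
    have qq: "\<bar>q \<bullet> q - C\<bar> \<le> \<nu> * C"
      using quad[of c] unfolding q_def[symmetric] C_def[symmetric] power2_norm_eq_inner .
    then have "q \<bullet> q - C \<le> \<nu> * C" by arith
    then have q2: "q \<bullet> q \<le> (1 + \<nu>) * C" by (simp add: distrib_right)
    have "C\<^sup>2 \<le> (p \<bullet> p) * (q \<bullet> q)" unfolding Cpq by (rule Cauchy_Schwarz_ineq)
    also have "p \<bullet> p = N" by (simp add: N_def power2_norm_eq_inner)
    also have "N * (q \<bullet> q) \<le> N * ((1 + \<nu>) * C)"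
      using q2 N0 by (rule mult_left_mono)
    finally have h: "C * C \<le> C * ((1 + \<nu>) * N)" by (simp add: power2_eq_square mult_ac)
    show ?thesis
    proof (cases "C = 0")
      case True then show ?thesis using N0 nu by simp
    next
      case False then have "0 < C" using C0 by simp
      then show ?thesis using h by (rule mult_left_le_imp_le[rotated])
    qed
  qed
  have up: "(1 - \<nu>) * N \<le> C"
  proof -
    define A where "A = (\<Sum>l\<in>I. (a l)\<^sup>2)"
    have A0: "0 \<le> A" by (simp add: A_def sum_nonneg)
    have "\<bar>N - A\<bar> \<le> \<nu> * A"
      using quad[of a] unfolding N_def A_def a[symmetric] .
    then have "A - N \<le> \<nu> * A" by arith
    then have NA: "(1 - \<nu>) * A \<le> N" by (simp add: left_diff_distrib)
    have "N\<^sup>2 \<le> A * C" unfolding Nac A_def C_def by (rule Cauchy_Schwarz_ineq_sum)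
    then have "(1 - \<nu>) * N\<^sup>2 \<le> (1 - \<nu>) * (A * C)" by (rule mult_left_mono) (use nu in simp)
    also have "\<dots> = ((1 - \<nu>) * A) * C" by (rule mult.assoc[symmetric])
    also have "\<dots> \<le> N * C" using NA C0 by (rule mult_right_mono)
    finally have h: "N * ((1 - \<nu>) * N) \<le> N * C" by (simp add: power2_eq_square mult_ac)
    show ?thesis
    proof (cases "N = 0")
      case True then show ?thesis using C0 by simp
    next
      case False then have "0 < N" using N0 by simp
      then show ?thesis using h by (rule mult_left_le_imp_le[rotated])
    qed
  qed
  have "inverse (1 + \<nu>) * C = C / (1 + \<nu>)" by (simp add: divide_inverse mult.commute)
  also have "\<dots> \<le> N" using low nu by (simp add: pos_divide_le_eq mult.commute)
  finally have L: "inverse (1 + \<nu>) * C \<le> N" .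
  have "inverse (1 - \<nu>) * C = C / (1 - \<nu>)" by (simp add: divide_inverse mult.commute)
  moreover have "N \<le> C / (1 - \<nu>)" using up nu by (simp add: pos_le_divide_eq mult.commute)
  ultimately have U: "N \<le> inverse (1 - \<nu>) * C" by simp
  have E1: "(\<Sum>l\<in>I. (\<Sum>i\<in>UNIV. x $ i * X $ i $ l)\<^sup>2) = C" by (simp add: C_def cdef)
  have E2: "orth_proj ((\<lambda>l. column l X) ` I) x = p" by (simp add: p_def S_def w_def[abs_def])
  show ?thesis unfolding E1 E2 N_def[symmetric] using L U by (rule conjI)
qed

end
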